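(* Let $\gamma>0$, $\alpha\in\mathbb{R}$ and $p\ge\max\{1,1-\alpha\}$. There is a constant $C>0$ depending only on $p,\gamma,\alpha$ such that for every characteristic function $f$ of a measurable subset of $(0,\infty)$ of finite Lebesgue measure, $$\int_0^\infty f(t)\sinh^\gamma t\,dt\le C\Big(\int_0^\infty f(t)\cosh^\alpha t\,\sinh^{p\gamma-\alpha}t\,dt\Big)^{1/p}.$$ *)

theory Defs
  imports "HOL-Analysis.Analysis"
begin

definition ennreal_powr :: "ennreal \<Rightarrow> real \<Rightarrow> ennreal" where
  "ennreal_powr x a = (if x = \<infinity> then \<infinity> else ennreal (enn2real x powr a))"

end

theory Submission imports Defs begin

lemma cont_sinh: "continuous_on UNIV (sinh::real\<Rightarrow>real)"
  using continuous_on_sinh[OF continuous_on_id, of UNIV] by (simp add: id_def)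
lemma cont_cosh: "continuous_on UNIV (cosh::real\<Rightarrow>real)"
  using continuous_on_cosh[OF continuous_on_id, of UNIV] by (simp add: id_def)

lemma meas_w:
  assumes "E \<in> sets lebesgue"
  shows "(\<lambda>t. ennreal (indicator E t * cosh t powr a * sinh t powr b)) \<in> borel_measurable lebesgue"
proof -
  have c: "(cosh::real\<Rightarrow>real) \<in> borel_measurable borel" "(sinh::real\<Rightarrow>real) \<in> borel_measurable borel"
    by (intro borel_measurable_continuous_onI cont_sinh cont_cosh)+
  have "(\<lambda>t. cosh t powr a * sinh t powr b) \<in> borel_measurable lborel"
    using c by simp
  then have h: "(\<lambda>t. cosh t powr a * sinh t powr b) \<in> borel_measurable lebesgue"
    by (rule measurable_completion)
  have "(\<lambda>t. indicator E t * (cosh t powr a * sinh t powr b)) \<in> borel_measurable lebesgue"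
    using assms h by measurable
  then show ?thesis by (simp add: mult.assoc)
qed

lemma meas_g:
  shows "(\<lambda>t. ennreal (indicator {0..T} t * sinh t powr (g::real))) \<in> borel_measurable lebesgue"
proof -
  have c: "(sinh::real\<Rightarrow>real) \<in> borel_measurable borel"
    by (intro borel_measurable_continuous_onI cont_sinh)
  have "(\<lambda>t. indicator {0..T} t * sinh t powr g) \<in> borel_measurable lborel"
    using c by simp
  then have h: "(\<lambda>t. indicator {0..T} t * sinh t powr g) \<in> borel_measurable lebesgue"
    by (rule measurable_completion)
  then show ?thesis by simp
qed

lemma ftc_bound:
  fixes g T :: real
  assumes g: "g > 0" and T: "T \<ge> 0"
  shows "(\<integral>\<^sup>+ t. ennreal (indicator {0..T} t * sinh t powr g) \<partial>lebesgue) \<le> ennreal (sinh T powr g / g)"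
proof -
  have hi: "((\<lambda>t. sinh t powr (g-1) * cosh t) has_integral (sinh T powr g / g - sinh 0 powr g / g)) {0..T}"
  proof (rule fundamental_theorem_of_calculus_interior[OF T])
    show "continuous_on {0..T} (\<lambda>t. sinh t powr g / g)"
      using g by (intro continuous_intros continuous_on_powr') (auto intro: continuous_intros)
    fix x assume x: "x \<in> {0<..<T}"
    then have sp: "sinh x > 0" by simp
    have d0: "((\<lambda>t. sinh t powr g) has_real_derivative g * sinh x powr (g - 1) * cosh x) (at x)"
      using DERIV_fun_powr[OF has_field_derivative_sinh[OF DERIV_ident] sp, of g] by simp
    have "((\<lambda>t. sinh t powr g / g) has_real_derivative (g * sinh x powr (g - 1) * cosh x) / g) (at x)"
      by (rule DERIV_cdivide[OF d0])
    then show "((\<lambda>t. sinh t powr g / g) has_vector_derivative sinh x powr (g-1) * cosh x) (at x)"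
      using g by (simp add: has_real_derivative_iff_has_vector_derivative[symmetric])
  qed
  have eq: "(\<integral>\<^sup>+ t. ennreal (indicator {0..T} t * (sinh t powr (g-1) * cosh t)) \<partial>lborel) = ennreal (sinh T powr g / g)"
    using nn_integral_has_integral_lebesgue[OF _ hi] by simp
  have "(\<integral>\<^sup>+ t. ennreal (indicator {0..T} t * sinh t powr g) \<partial>lebesgue)
      \<le> (\<integral>\<^sup>+ t. ennreal (indicator {0..T} t * (sinh t powr (g-1) * cosh t)) \<partial>lebesgue)"
  proof (rule nn_integral_mono)
    fix t
    show "ennreal (indicator {0..T} t * sinh t powr g) \<le> ennreal (indicator {0..T} t * (sinh t powr (g-1) * cosh t))"
    proof (cases "t \<in> {0..T} \<and> t > 0")
      case True
      then have sp: "sinh t > 0" by simp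
      have "sinh t powr g = sinh t powr (g-1) * sinh t"
        using sp by (simp add: powr_diff)
      also have "\<dots> \<le> sinh t powr (g-1) * cosh t"
        by (intro mult_left_mono sinh_le_cosh_real) simp
      finally show ?thesis using True by (intro ennreal_leI) simp
    next
      case False
      then show ?thesis
        using g by (cases "t \<in> {0..T}") (auto intro!: ennreal_leI)
    qed
  qed
  also have "\<dots> = ennreal (sinh T powr g / g)"
    using eq by (simp add: nn_integral_completion)
  finally show ?thesis .
qed


lemma crude_bound:
  fixes g T :: real
  assumes g: "g > 0" and T: "T \<ge> 0"
  shows "(\<integral>\<^sup>+ t. ennreal (indicator {0..T} t * sinh t powr g) \<partial>lebesgue) \<le> ennreal (T * sinh T powr g)"
proof -
  have hi: "((\<lambda>x. sinh T powr g) has_integral (T * sinh T powr g)) {0..T}"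
    using has_integral_const_real[of "sinh T powr g" 0 T] T by simp
  have eq: "(\<integral>\<^sup>+ t. ennreal (indicator {0..T} t * sinh T powr g) \<partial>lborel) = ennreal (T * sinh T powr g)"
    using nn_integral_has_integral_lebesgue[OF _ hi] by simp
  have "(\<integral>\<^sup>+ t. ennreal (indicator {0..T} t * sinh t powr g) \<partial>lebesgue)
      \<le> (\<integral>\<^sup>+ t. ennreal (indicator {0..T} t * sinh T powr g) \<partial>lebesgue)"
  proof (rule nn_integral_mono)
    fix t
    show "ennreal (indicator {0..T} t * sinh t powr g) \<le> ennreal (indicator {0..T} t * sinh T powr g)"
    proof (cases "t \<in> {0..T}")
      case True
      then have "sinh t powr g \<le> sinh T powr g"
        using g by (intro powr_mono2) auto
      then show ?thesis using True by (intro ennreal_leI) simp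
    qed simp
  qed
  also have "\<dots> = ennreal (T * sinh T powr g)"
    using eq by (simp add: nn_integral_completion)
  finally show ?thesis .
qed

lemma sinh_ge_self:
  fixes x :: real assumes "x \<ge> 0" shows "x \<le> sinh x"
proof -
  have "(\<lambda>x. sinh x - x) 0 \<le> (\<lambda>x. sinh x - x) x"
  proof (rule DERIV_nonneg_imp_nondecreasing[OF assms])
    fix y
    have "((\<lambda>x. sinh x - x) has_real_derivative cosh y * 1 - 1) (at y)"
      by (intro DERIV_diff has_field_derivative_sinh[OF DERIV_ident] DERIV_ident)
    then show "\<exists>d. ((\<lambda>x. sinh x - x) has_real_derivative d) (at y) \<and> 0 \<le> d"
      using cosh_real_ge_1[of y] by auto
  qed
  then show ?thesis by simp
qed

lemma arsinh_le_self:
  fixes S :: real assumes "S \<ge> 0" shows "arsinh S \<le> S"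
proof -
  have "0 \<le> arsinh S" using assms arsinh_real_neg_iff[of S] by linarith
  then have "arsinh S \<le> sinh (arsinh S)" by (rule sinh_ge_self)
  then show ?thesis by simp
qed

lemma powr_cmp:
  fixes x y l g a b :: real
  assumes "x > 0" "y > 0"
    and "g * ln x \<le> l + a * ln y + b * ln x"
  shows "x powr g \<le> exp l * y powr a * x powr b"
proof -
  have "x powr g = exp (g * ln x)" using assms by (simp add: powr_def)
  also have "\<dots> \<le> exp (l + a * ln y + b * ln x)" using assms(3) by simp
  also have "\<dots> = exp l * y powr a * x powr b" using assms by (simp add: powr_def exp_add)
  finally show ?thesis .
qed


lemma pointwise_log:
  fixes \<gamma> \<alpha> p \<Lambda> L M :: real
  assumes g: "\<gamma> > 0" and p1: "p > 1" and pa: "p \<ge> 1 - \<alpha>"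
  defines "q \<equiv> (p - 1) * \<gamma>"
  defines "a \<equiv> max 0 (- \<alpha>)"
  defines "Lp \<equiv> \<Lambda> - a * ln 2"
  defines "lv \<equiv> (if Lp \<le> 0 then - Lp / q else - Lp / (q + a))"
  assumes L: "L > lv" and hML: "M \<ge> L" and M0: "M \<ge> 0"
    and Mpos: "L \<ge> 0 \<Longrightarrow> M \<le> ln 2 + L" and Mneg: "L < 0 \<Longrightarrow> M \<le> ln 2"
  shows "\<gamma> * L \<le> \<Lambda> + \<alpha> * M + (p * \<gamma> - \<alpha>) * L"
proof -
  have q: "q > 0" using g p1 unfolding q_def by simp
  have a0: "a \<ge> 0" unfolding a_def by simp
  have key: "\<gamma> * L \<le> \<Lambda> + \<alpha> * M + (p * \<gamma> - \<alpha>) * L \<longleftrightarrow> 0 \<le> \<Lambda> + q * L + \<alpha> * (M - L)"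
    unfolding q_def by (simp add: algebra_simps)
  show ?thesis
  proof (cases "\<alpha> \<ge> 0")
    case True
    then have a: "a = 0" unfolding a_def by simp
    have "\<alpha> * (M - L) \<ge> 0" using True hML by simp
    moreover have "lv = - \<Lambda> / q" unfolding lv_def Lp_def a by simp
    then have "q * lv = - \<Lambda>" using q by simp
    moreover have "q * L > q * lv" using q L by simp
    ultimately show ?thesis using key by linarith
  next
    case False
    then have a: "a = - \<alpha>" unfolding a_def by simp
    show ?thesis
    proof (cases "Lp \<le> 0")
      case True
      then have l: "lv = - Lp / q" unfolding lv_def by simp
      then have ql: "q * lv = - Lp" using q by simp
      have "lv \<ge> 0" using l True q by (simp add: divide_nonpos_pos)
      then have L0: "L \<ge> 0" using L by simp
      have "a * (M - L) \<le> a * ln 2" using Mpos[OF L0] a0 by (intro mult_left_mono) auto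
      moreover have "q * L > q * lv" using q L by simp
      ultimately show ?thesis using key ql a unfolding Lp_def by (simp add: algebra_simps)
    next
      case F2: False
      then have l: "lv = - Lp / (q + a)" unfolding lv_def by simp
      have qa: "q + a > 0" using q a0 by simp
      then have ql: "(q + a) * lv = - Lp" using l by simp
      show ?thesis
      proof (cases "L \<ge> 0")
        case True
        have "a * (M - L) \<le> a * ln 2" using Mpos[OF True] a0 by (intro mult_left_mono) auto
        moreover have "q * L \<ge> 0" using q True by simp
        ultimately show ?thesis using key a F2 unfolding Lp_def by (simp add: algebra_simps)
      next
        case False
        have "a * M \<le> a * ln 2" using Mneg False a0 by (intro mult_left_mono) auto
        moreover have "(q + a) * L > (q + a) * lv" using qa L by simp
        ultimately show ?thesis using key a ql unfolding Lp_def by (simp add: algebra_simps)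
      qed
    qed
  qed
qed


lemma key_split:
  fixes \<gamma> \<alpha> p :: real
  assumes g: "\<gamma> > 0" and p1: "p > 1" and pa: "p \<ge> 1 - \<alpha>"
  defines "K \<equiv> exp (max 0 (- \<alpha>) * ln 2 / (p - 1)) * (1 + 1 / \<gamma>)"
  shows "\<exists>T\<ge>0. (\<forall>t>T. sinh t powr \<gamma> \<le> exp \<Lambda> * cosh t powr \<alpha> * sinh t powr (p * \<gamma> - \<alpha>))
     \<and> (\<integral>\<^sup>+ t. ennreal (indicator {0..T} t * sinh t powr \<gamma>) \<partial>lebesgue) \<le> ennreal (K * exp (- \<Lambda> / (p - 1)))"
proof -
  define q where "q = (p - 1) * \<gamma>"
  define a where "a = max 0 (- \<alpha>)"
  define Lp where "Lp = \<Lambda> - a * ln 2"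
  define lv where "lv = (if Lp \<le> 0 then - Lp / q else - Lp / (q + a))"
  define T where "T = arsinh (exp lv)"
  have q: "q > 0" using g p1 unfolding q_def by simp
  have a0: "a \<ge> 0" unfolding a_def by simp
  have ap: "a \<le> p - 1" using pa p1 unfolding a_def by simp
  have sT: "sinh T = exp lv" unfolding T_def by simp
  have T0: "T \<ge> 0" using sT sinh_real_nonneg_iff[of T] by simp
  have pw: "\<forall>t>T. sinh t powr \<gamma> \<le> exp \<Lambda> * cosh t powr \<alpha> * sinh t powr (p * \<gamma> - \<alpha>)"
  proof (intro allI impI)
    fix t assume tT: "t > T"
    have u: "sinh t > exp lv" using tT sT sinh_real_le_iff[of t T] by (metis not_le)
    then have u0: "sinh t > 0" by (meson exp_gt_zero less_trans)
    have c0: "cosh t > 0" using cosh_real_ge_1[of t] by simp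
    define L where "L = ln (sinh t)"
    define M where "M = ln (cosh t)"
    have L: "L > lv" unfolding L_def using u u0 by (metis exp_less_cancel_iff exp_ln)
    have hML: "M \<ge> L" unfolding L_def M_def using u0 sinh_le_cosh_real[of t] by simp
    have M0: "M \<ge> 0" unfolding M_def using cosh_real_ge_1[of t] by simp
    have t0: "t > 0" using tT T0 by simp
    have c1: "cosh t \<le> 1 + sinh t"
    proof -
      have "exp (- t) \<le> 1" using t0 by simp
      then show ?thesis using cosh_minus_sinh[of t] by linarith
    qed
    have Mpos: "M \<le> ln 2 + L" if "L \<ge> 0"
    proof -
      have "sinh t \<ge> 1" using that u0 unfolding L_def by (simp add: ln_ge_zero_iff)
      then have "cosh t \<le> 2 * sinh t" using c1 by simp
      then have "M \<le> ln (2 * sinh t)" unfolding M_def using c0 u0 by (subst ln_le_cancel_iff) auto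
      also have "\<dots> = ln 2 + L" unfolding L_def using u0 by (simp add: ln_mult)
      finally show ?thesis .
    qed
    have Mneg: "M \<le> ln 2" if "L < 0"
    proof -
      have "sinh t < 1" using that u0 unfolding L_def by (simp add: ln_less_zero_iff)
      then have "cosh t \<le> 2" using c1 by simp
      then show ?thesis unfolding M_def using c0 by simp
    qed
    have "\<gamma> * L \<le> \<Lambda> + \<alpha> * M + (p * \<gamma> - \<alpha>) * L"
      using pointwise_log[OF g p1 pa, of \<Lambda> L M] L hML M0 Mpos Mneg
      unfolding q_def a_def Lp_def lv_def by blast
    then show "sinh t powr \<gamma> \<le> exp \<Lambda> * cosh t powr \<alpha> * sinh t powr (p * \<gamma> - \<alpha>)"
      unfolding L_def M_def by (rule powr_cmp[OF u0 c0])
  qed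
  have E: "exp (- Lp / (p - 1)) = exp (a * ln 2 / (p - 1)) * exp (- \<Lambda> / (p - 1))"
    unfolding Lp_def by (simp add: exp_add[symmetric] diff_divide_distrib add_divide_distrib algebra_simps)
  have ep: "exp (a * ln 2 / (p - 1)) * exp (- \<Lambda> / (p - 1)) \<ge> 0" by simp
  have int: "(\<integral>\<^sup>+ t. ennreal (indicator {0..T} t * sinh t powr \<gamma>) \<partial>lebesgue) \<le> ennreal (K * exp (- \<Lambda> / (p - 1)))"
  proof (cases "Lp \<le> 0")
    case True
    then have l: "lv = - Lp / q" unfolding lv_def by simp
    have "(\<integral>\<^sup>+ t. ennreal (indicator {0..T} t * sinh t powr \<gamma>) \<partial>lebesgue) \<le> ennreal (sinh T powr \<gamma> / \<gamma>)"
      by (rule ftc_bound[OF g T0])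
    also have "sinh T powr \<gamma> = exp (- Lp / (p - 1))"
      unfolding sT l q_def using g p1 by (simp add: powr_def)
    also have "ennreal (exp (- Lp / (p - 1)) / \<gamma>) \<le> ennreal (K * exp (- \<Lambda> / (p - 1)))"
    proof (intro ennreal_leI)
      have "exp (- Lp / (p - 1)) / \<gamma> = (exp (a * ln 2 / (p - 1)) * exp (- \<Lambda> / (p - 1))) * (1 / \<gamma>)"
        using E by simp
      also have "\<dots> \<le> (exp (a * ln 2 / (p - 1)) * exp (- \<Lambda> / (p - 1))) * (1 + 1 / \<gamma>)"
        by (intro mult_left_mono ep) simp
      also have "\<dots> = K * exp (- \<Lambda> / (p - 1))" unfolding K_def a_def by simp
      finally show "exp (- Lp / (p - 1)) / \<gamma> \<le> K * exp (- \<Lambda> / (p - 1))" .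
    qed
    finally show ?thesis .
  next
    case False
    then have l: "lv = - Lp / (q + a)" unfolding lv_def by simp
    have qa: "q + a > 0" using q a0 by simp
    have "(\<integral>\<^sup>+ t. ennreal (indicator {0..T} t * sinh t powr \<gamma>) \<partial>lebesgue) \<le> ennreal (T * sinh T powr \<gamma>)"
      by (rule crude_bound[OF g T0])
    also have "T * sinh T powr \<gamma> \<le> exp lv * exp lv powr \<gamma>"
      unfolding sT by (intro mult_right_mono) (auto simp: T_def intro: arsinh_le_self)
    also have "exp lv * exp lv powr \<gamma> = exp ((1 + \<gamma>) * lv)"
      by (simp add: powr_def exp_add[symmetric] algebra_simps)
    also have "(1 + \<gamma>) * lv \<le> - Lp / (p - 1)"
    proof -
      have "(1 + \<gamma>) * lv = - Lp * ((1 + \<gamma>) / (q + a))" unfolding l by simp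
      also have "\<dots> \<le> - Lp * (1 / (p - 1))"
      proof (intro mult_left_mono_neg)
        show "- Lp \<le> 0" using False by simp
        have h: "q + a \<le> (1 + \<gamma>) * (p - 1)" using ap unfolding q_def by (simp add: algebra_simps)
        have "1 / (p - 1) = (1 + \<gamma>) / ((1 + \<gamma>) * (p - 1))" using g by simp
        also have "\<dots> \<le> (1 + \<gamma>) / (q + a)"
          using h qa g by (intro divide_left_mono) auto
        finally show "1 / (p - 1) \<le> (1 + \<gamma>) / (q + a)" .
      qed
      finally show ?thesis by simp
    qed
    then have "exp ((1 + \<gamma>) * lv) \<le> exp (- Lp / (p - 1))" by simp
    also have "\<dots> \<le> K * exp (- \<Lambda> / (p - 1))"
    proof -
      have "exp (- Lp / (p - 1)) = (exp (a * ln 2 / (p - 1)) * exp (- \<Lambda> / (p - 1))) * 1"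
        using E by simp
      also have "\<dots> \<le> (exp (a * ln 2 / (p - 1)) * exp (- \<Lambda> / (p - 1))) * (1 + 1 / \<gamma>)"
        using g by (intro mult_left_mono ep) simp
      also have "\<dots> = K * exp (- \<Lambda> / (p - 1))" unfolding K_def a_def by simp
      finally show ?thesis .
    qed
    finally show ?thesis by (simp add: ennreal_leI)
  qed
  show ?thesis using T0 pw int by blast
qed


theorem lemma5p3:
  fixes \<gamma> \<alpha> p :: real
  assumes "\<gamma> > 0" and "p \<ge> max 1 (1 - \<alpha>)"
  shows "\<exists>C::real. C > 0 \<and>
    (\<forall>E. E \<in> sets lebesgue \<longrightarrow> E \<subseteq> {0<..} \<longrightarrow> emeasure lebesgue E < \<infinity> \<longrightarrow>
      (\<integral>\<^sup>+ t. ennreal (indicator E t * sinh t powr \<gamma>) \<partial>lebesgue)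
        \<le> ennreal C * ennreal_powr
             (\<integral>\<^sup>+ t. ennreal (indicator E t * cosh t powr \<alpha> * sinh t powr (p * \<gamma> - \<alpha>)) \<partial>lebesgue)
             (1 / p))"
proof (cases "p = 1")
  case True
  have g: "\<gamma> > 0" using assms by simp
  have a0: "\<alpha> \<ge> 0" using assms True by simp
  show ?thesis
  proof (intro exI[of _ 1] conjI allI impI)
    fix E :: "real set"
    assume E: "E \<in> sets lebesgue" "E \<subseteq> {0<..}" "emeasure lebesgue E < \<infinity>"
    define X where "X = (\<integral>\<^sup>+ t. ennreal (indicator E t * cosh t powr \<alpha> * sinh t powr (p * \<gamma> - \<alpha>)) \<partial>lebesgue)"
    have "(\<integral>\<^sup>+ t. ennreal (indicator E t * sinh t powr \<gamma>) \<partial>lebesgue) \<le> X"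
      unfolding X_def
    proof (rule nn_integral_mono)
      fix t
      show "ennreal (indicator E t * sinh t powr \<gamma>) \<le> ennreal (indicator E t * cosh t powr \<alpha> * sinh t powr (p * \<gamma> - \<alpha>))"
      proof (cases "t \<in> E")
        case True
        then have t0: "t > 0" using E by auto
        then have u0: "sinh t > 0" by simp
        have c0: "cosh t > 0" using cosh_real_ge_1[of t] by simp
        have "ln (sinh t) \<le> ln (cosh t)" using u0 sinh_le_cosh_real[of t] by simp
        then have "\<alpha> * ln (sinh t) \<le> \<alpha> * ln (cosh t)" using a0 by (rule mult_left_mono)
        then have "\<gamma> * ln (sinh t) \<le> 0 + \<alpha> * ln (cosh t) + (p * \<gamma> - \<alpha>) * ln (sinh t)"
          using True by (simp add: \<open>p = 1\<close> algebra_simps)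
        from powr_cmp[OF u0 c0 this] have "sinh t powr \<gamma> \<le> cosh t powr \<alpha> * sinh t powr (p * \<gamma> - \<alpha>)"
          by simp
        then show ?thesis using True by (intro ennreal_leI) simp
      qed simp
    qed
    also have "X \<le> ennreal 1 * ennreal_powr X (1 / p)"
      by (cases X rule: ennreal_cases) (auto simp: ennreal_powr_def \<open>p = 1\<close>)
    finally show "(\<integral>\<^sup>+ t. ennreal (indicator E t * sinh t powr \<gamma>) \<partial>lebesgue) \<le> ennreal 1 * ennreal_powr
             (\<integral>\<^sup>+ t. ennreal (indicator E t * cosh t powr \<alpha> * sinh t powr (p * \<gamma> - \<alpha>)) \<partial>lebesgue) (1 / p)"
      unfolding X_def .
  qed simp
next
  case False
  have g: "\<gamma> > 0" using assms by simp
  have p1: "p > 1" using assms False by simp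
  have pa: "p \<ge> 1 - \<alpha>" using assms by simp
  define K where "K = exp (max 0 (- \<alpha>) * ln 2 / (p - 1)) * (1 + 1 / \<gamma>)"
  have K0: "K > 0" unfolding K_def using g by (simp add: add_pos_pos)
  show ?thesis
  proof (intro exI[of _ "1 + K"] conjI allI impI)
    show "1 + K > 0" using K0 by simp
    fix E :: "real set"
    assume E: "E \<in> sets lebesgue" "E \<subseteq> {0<..}" "emeasure lebesgue E < \<infinity>"
    define X where "X = (\<integral>\<^sup>+ t. ennreal (indicator E t * cosh t powr \<alpha> * sinh t powr (p * \<gamma> - \<alpha>)) \<partial>lebesgue)"
    define G where "G = (\<integral>\<^sup>+ t. ennreal (indicator E t * sinh t powr \<gamma>) \<partial>lebesgue)"
    have bound: "G \<le> ennreal (exp \<Lambda>) * X + ennreal (K * exp (- \<Lambda> / (p - 1)))" for \<Lambda>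
    proof -
      obtain T where T0: "T \<ge> 0"
        and pw: "\<forall>t>T. sinh t powr \<gamma> \<le> exp \<Lambda> * cosh t powr \<alpha> * sinh t powr (p * \<gamma> - \<alpha>)"
        and int: "(\<integral>\<^sup>+ t. ennreal (indicator {0..T} t * sinh t powr \<gamma>) \<partial>lebesgue) \<le> ennreal (K * exp (- \<Lambda> / (p - 1)))"
        using key_split[OF g p1 pa, of \<Lambda>] unfolding K_def by blast
      have "G \<le> (\<integral>\<^sup>+ t. ennreal (exp \<Lambda>) * ennreal (indicator E t * cosh t powr \<alpha> * sinh t powr (p * \<gamma> - \<alpha>))
                 + ennreal (indicator {0..T} t * sinh t powr \<gamma>) \<partial>lebesgue)"
        unfolding G_def
      proof (rule nn_integral_mono)
        fix t
        show "ennreal (indicator E t * sinh t powr \<gamma>) \<le> ennreal (exp \<Lambda>) * ennreal (indicator E t * cosh t powr \<alpha> * sinh t powr (p * \<gamma> - \<alpha>))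
                 + ennreal (indicator {0..T} t * sinh t powr \<gamma>)"
        proof (cases "t \<in> E")
          case True
          then have t0: "t > 0" using E by auto
          show ?thesis
          proof (cases "t \<le> T")
            case True
            then have eq: "indicator E t * sinh t powr \<gamma> = indicator {0..T} t * sinh t powr \<gamma>"
              using t0 \<open>t \<in> E\<close> by (simp add: indicator_def)
            show ?thesis unfolding eq by (rule add_increasing) simp_all
          next
            case False
            then have "sinh t powr \<gamma> \<le> exp \<Lambda> * cosh t powr \<alpha> * sinh t powr (p * \<gamma> - \<alpha>)" using pw by simp
            then have "ennreal (indicator E t * sinh t powr \<gamma>) \<le> ennreal (exp \<Lambda>) * ennreal (indicator E t * cosh t powr \<alpha> * sinh t powr (p * \<gamma> - \<alpha>))"
              using \<open>t \<in> E\<close> by (simp add: ennreal_mult[symmetric] ennreal_leI mult.assoc)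
            then show ?thesis by (simp add: add_increasing2)
          qed
        qed simp
      qed
      also have "\<dots> = ennreal (exp \<Lambda>) * X + (\<integral>\<^sup>+ t. ennreal (indicator {0..T} t * sinh t powr \<gamma>) \<partial>lebesgue)"
      proof -
        have m1: "(\<lambda>t. ennreal (exp \<Lambda>) * ennreal (indicator E t * cosh t powr \<alpha> * sinh t powr (p * \<gamma> - \<alpha>))) \<in> borel_measurable lebesgue"
          using meas_w[OF E(1), of \<alpha> "p * \<gamma> - \<alpha>"] by measurable
        show ?thesis
          by (simp only: nn_integral_add[OF m1 meas_g] nn_integral_cmult[OF meas_w[OF E(1)]] X_def)
      qed
      also have "\<dots> \<le> ennreal (exp \<Lambda>) * X + ennreal (K * exp (- \<Lambda> / (p - 1)))"
        using int by (rule add_left_mono)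
      finally show ?thesis .
    qed
    show "G \<le> ennreal (1 + K) * ennreal_powr X (1 / p)"
      unfolding G_def[symmetric] X_def[symmetric]
    proof (cases X rule: ennreal_cases)
      case top
      then show ?thesis using K0 by (simp add: ennreal_powr_def ennreal_mult_top)
    next
      case (real x)
      have RHS: "ennreal (1 + K) * ennreal_powr X (1 / p) = ennreal ((1 + K) * x powr (1 / p))"
        using real K0 by (simp add: ennreal_powr_def ennreal_mult)
      show ?thesis
      proof (cases "x = 0")
        case True
        have "G \<le> 0"
        proof (rule ennreal_le_epsilon)
          fix e :: real assume e: "0 < e"
          define \<Lambda> where "\<Lambda> = - (p - 1) * ln (e / K)"
          have "K * exp (- \<Lambda> / (p - 1)) = e"
          proof -
            have "- \<Lambda> / (p - 1) = ln (e / K)" unfolding \<Lambda>_def using p1 by (simp add: field_simps)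
            then show ?thesis using e K0 by simp
          qed
          then show "G \<le> 0 + ennreal e" using bound[of \<Lambda>] real True by simp
        qed
        then show ?thesis by simp
      next
        case False
        then have x0: "x > 0" using real by simp
        define \<Lambda> where "\<Lambda> = (1 - p) / p * ln x"
        have e1: "exp \<Lambda> * x = x powr (1 / p)"
        proof -
          have "exp \<Lambda> * x = exp (\<Lambda> + ln x)" using x0 by (simp add: exp_add)
          also have "\<Lambda> + ln x = ln x / p" unfolding \<Lambda>_def using p1 by (simp add: field_simps)
          finally show ?thesis using x0 by (simp add: powr_def)
        qed
        have e2: "exp (- \<Lambda> / (p - 1)) = x powr (1 / p)"
        proof -
          have "- \<Lambda> / (p - 1) = ln x / p" unfolding \<Lambda>_def using p1 by (simp add: field_simps)
          then show ?thesis using x0 by (simp add: powr_def)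
        qed
        have "G \<le> ennreal (exp \<Lambda>) * X + ennreal (K * exp (- \<Lambda> / (p - 1)))" by (rule bound)
        also have "\<dots> = ennreal (exp \<Lambda> * x + K * exp (- \<Lambda> / (p - 1)))"
          using real x0 K0 by (simp add: ennreal_mult ennreal_plus[symmetric])
        also have "exp \<Lambda> * x + K * exp (- \<Lambda> / (p - 1)) = (1 + K) * x powr (1 / p)"
          using e1 e2 by (simp add: algebra_simps)
        finally show ?thesis using RHS by simp
      qed
    qed
  qed
qed

end
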